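(* Let $(T,C,K,R)$ be an interval knapsack covering instance, $y\in[0,1]^T$, $S^+=\{s\in[T]:y_s=1\}$, and $\tilde R_{a,b}:=\max\{R_{a,b}-C(S^+\cap(a,b]),0\}$ for every interval $(a,b]$ over $[T]$. Assume that for every interval $(a,b]$ with $\tilde R_{a,b}>0$, either $\sum_{s\in(a,b]\setminus S^+}\min\{C_s,\tilde R_{a,b}\}y_s\ge10\tilde R_{a,b}$ or $\sum_{s\in(a,b]\setminus S^+:C_s\ge\tilde R_{a,b}}y_s\ge6$. For every interval $(a,b]$ define $$\tilde R'_{a,b}:=\sup\Big\{W\ge0:\ \sum_{s\in(a,b]\setminus S^+}\min\{C_s,W\}y_s\ge2W\ \text{ or }\ \sum_{s\in(a,b]\setminus S^+:C_s\ge W}y_s\ge1\Big\}.$$ Construct a family $\mathcal S$ of intervals by the recursive procedure $P(a,b)$ started as $P(0,T)$ with $\mathcal S=\emptyset$: $P(a,b)$ adds $(a,b]$ to $\mathcal S$, and if $a+1<b$ it picks some $c\in(a,b)$ maximizing $\min\{\tilde R'_{a,c},\tilde R'_{c,b}\}$ and calls $P(a,c)$ and $P(c,b)$. Then for every interval $(a,b]$ with $\tilde R_{a,b}>0$ there exists $(a',b']\in\mathcal S$ with $(a',b']\subseteq(a,b]$ and $\tilde R'_{a',b'}\ge\tilde R_{a,b}$.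
   Context: For integers $a<b$, $(a,b]$ denotes the set of integers $\{a+1,\dots,b\}$; an interval over $[T]$ is $(a,b]$ with integers $0\le a<b\le T$. For $S\subseteq[T]$, $C(S)=\sum_{s\in S}C_s$. An interval knapsack covering instance $(T,C,K,R)$ consists of knapsacks $[T]$, each $s$ with capacity $C_s>0$ and cost $K_s\ge0$, and a requirement $R_{a,b}\ge0$ for every interval $(a,b]$ over $[T]$. *)

theory Defs
  imports Main "HOL-Library.Extended_Real" Complex_Main
begin

(* Knapsacks are [T] = {1..T}; an interval (a,b] is the pair (a,b), with set {a<..b}. *)

definition Splus :: "nat \<Rightarrow> (nat \<Rightarrow> real) \<Rightarrow> nat set" where
  "Splus T y = {s \<in> {1..T}. y s = 1}"

definition Rtil :: "nat \<Rightarrow> (nat \<Rightarrow> real) \<Rightarrow> (nat \<Rightarrow> nat \<Rightarrow> real) \<Rightarrow> (nat \<Rightarrow> real)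
                     \<Rightarrow> nat \<Rightarrow> nat \<Rightarrow> real" where
  "Rtil T C R y a b = max (R a b - sum C (Splus T y \<inter> {a<..b})) 0"

definition Rprime :: "nat \<Rightarrow> (nat \<Rightarrow> real) \<Rightarrow> (nat \<Rightarrow> real) \<Rightarrow> nat \<Rightarrow> nat \<Rightarrow> real" where
  "Rprime T C y a b = Sup {W. W \<ge> 0 \<and>
      ((\<Sum>s\<in>{a<..b} - Splus T y. min (C s) W * y s) \<ge> 2 * W \<or>
       (\<Sum>s\<in>{s\<in>{a<..b} - Splus T y. C s \<ge> W}. y s) \<ge> 1)}"

(* proc T C y a b S: some run of the recursive procedure P(a,b) (with arbitrary choice of
   a maximizing split point c) adds exactly the intervals in S. *)
inductive proc :: "nat \<Rightarrow> (nat \<Rightarrow> real) \<Rightarrow> (nat \<Rightarrow> real) \<Rightarrow> nat \<Rightarrow> nat \<Rightarrow> (nat \<times> nat) set \<Rightarrow> bool"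
  for T C y where
  leaf: "a < b \<Longrightarrow> \<not> (a + 1 < b) \<Longrightarrow> proc T C y a b {(a, b)}"
| split: "a + 1 < b \<Longrightarrow> a < c \<Longrightarrow> c < b \<Longrightarrow>
     (\<forall>d. a < d \<and> d < b \<longrightarrow>
        min (Rprime T C y a d) (Rprime T C y d b) \<le> min (Rprime T C y a c) (Rprime T C y c b)) \<Longrightarrow>
     proc T C y a c S1 \<Longrightarrow> proc T C y c b S2 \<Longrightarrow>
     proc T C y a b (insert (a, b) (S1 \<union> S2))"

end

theory Submission
  imports Defs
begin

lemma proc_mem: "proc T C y x z S \<Longrightarrow> (x, z) \<in> S"
  by (induction rule: proc.induct) auto

lemma Rprime_ge:
  assumes Cpos: "\<forall>s\<in>{1..T}. C s > 0"
    and y01: "\<forall>s\<in>{1..T}. 0 \<le> y s \<and> y s \<le> 1"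
    and bT: "b \<le> T" and W0: "0 \<le> W"
    and P: "(\<Sum>s\<in>{a<..b} - Splus T y. min (C s) W * y s) \<ge> 2 * W \<or>
       (\<Sum>s\<in>{s\<in>{a<..b} - Splus T y. C s \<ge> W}. y s) \<ge> 1"
  shows "W \<le> Rprime T C y a b"
proof -
  let ?B = "sum C {a<..b}"
  have sub: "{a<..b} \<subseteq> {1..T}" using bT by auto
  have Cnn: "\<And>s. s \<in> {a<..b} \<Longrightarrow> C s > 0" using Cpos sub by auto
  have bdd: "bdd_above {W. W \<ge> 0 \<and>
      ((\<Sum>s\<in>{a<..b} - Splus T y. min (C s) W * y s) \<ge> 2 * W \<or>
       (\<Sum>s\<in>{s\<in>{a<..b} - Splus T y. C s \<ge> W}. y s) \<ge> 1)}"
    unfolding bdd_above_def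
  proof (intro exI ballI)
    fix W' assume "W' \<in> {W. W \<ge> 0 \<and>
      ((\<Sum>s\<in>{a<..b} - Splus T y. min (C s) W * y s) \<ge> 2 * W \<or>
       (\<Sum>s\<in>{s\<in>{a<..b} - Splus T y. C s \<ge> W}. y s) \<ge> 1)}"
    then have W'0: "W' \<ge> 0" and D: "(\<Sum>s\<in>{a<..b} - Splus T y. min (C s) W' * y s) \<ge> 2 * W' \<or>
       (\<Sum>s\<in>{s\<in>{a<..b} - Splus T y. C s \<ge> W'}. y s) \<ge> 1" by auto
    show "W' \<le> ?B"
      using D
    proof
      assume h: "(\<Sum>s\<in>{a<..b} - Splus T y. min (C s) W' * y s) \<ge> 2 * W'"
      have "(\<Sum>s\<in>{a<..b} - Splus T y. min (C s) W' * y s) \<le> (\<Sum>s\<in>{a<..b} - Splus T y. C s)"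
      proof (rule sum_mono)
        fix s assume "s \<in> {a<..b} - Splus T y"
        then have s: "s \<in> {a<..b}" by auto
        have "0 \<le> y s" "y s \<le> 1" using y01 sub s by auto
        moreover have "0 \<le> min (C s) W'" "min (C s) W' \<le> C s" using Cnn[OF s] W'0 by auto
        ultimately show "min (C s) W' * y s \<le> C s"
          by (metis mult_left_le order_trans)
      qed
      also have "\<dots> \<le> ?B"
        by (rule sum_mono2) (use Cnn in \<open>auto intro: less_imp_le\<close>)
      finally show ?thesis using h W'0 by linarith
    next
      assume h: "(\<Sum>s\<in>{s\<in>{a<..b} - Splus T y. C s \<ge> W'}. y s) \<ge> 1"
      have "{s\<in>{a<..b} - Splus T y. C s \<ge> W'} \<noteq> {}"
      proof
        assume "{s\<in>{a<..b} - Splus T y. C s \<ge> W'} = {}"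
        then have "(\<Sum>s\<in>{s\<in>{a<..b} - Splus T y. C s \<ge> W'}. y s) = 0" by (simp only: sum.empty)
        then show False using h by simp
      qed
      then obtain s where s: "s \<in> {a<..b}" "C s \<ge> W'" by auto
      have "C s \<le> ?B"
        by (rule member_le_sum) (use s Cnn in \<open>auto intro: less_imp_le\<close>)
      then show ?thesis using s by linarith
    qed
  qed
  show ?thesis unfolding Rprime_def
    by (rule cSup_upper) (use W0 P bdd in auto)
qed

lemma sum_split_ivl:
  fixes w :: "nat \<Rightarrow> real"
  assumes "a \<le> e" "e \<le> b"
  shows "sum w {a<..b} = sum w {a<..e} + sum w {e<..b}"
proof -
  have "{a<..b} = {a<..e} \<union> {e<..b}" using assms by auto
  then show ?thesis by (simp add: sum.union_disjoint ivl_disj_int)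
qed

lemma sum_mono_ivl:
  fixes w :: "nat \<Rightarrow> real"
  assumes "x \<le> a" "e \<le> T" and Hw: "\<forall>s\<in>{1..T}. 0 \<le> w s"
  shows "sum w {a<..e} \<le> sum w {x<..e}"
  by (rule sum_mono2) (use assms in auto)

lemma split_point:
  fixes w :: "nat \<Rightarrow> real"
  assumes Hw: "\<forall>s\<in>{1..T}. 0 \<le> w s \<and> w s \<le> U"
    and V: "V > 0" and U: "U \<ge> 0" and bT: "b \<le> T"
    and M: "2 * V + U \<le> sum w {a<..b}"
  shows "\<exists>e. a < e \<and> e < b \<and> V \<le> sum w {a<..e} \<and> V \<le> sum w {e<..b}"
proof -
  define e where "e = (LEAST e. V \<le> sum w {a<..e})"
  have ex: "V \<le> sum w {a<..b}" using M U V by linarith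
  have Pe: "V \<le> sum w {a<..e}" unfolding e_def by (rule LeastI[of _ b]) (rule ex)
  have eb: "e \<le> b" unfolding e_def by (rule Least_le) (rule ex)
  have ae: "a < e"
  proof (rule ccontr)
    assume "\<not> a < e"
    then have "{a<..e} = {}" by auto
    then show False using Pe V by simp
  qed
  then obtain e' where e': "e = Suc e'" "a \<le> e'" by (cases e) auto
  have notP: "\<not> V \<le> sum w {a<..e'}"
    unfolding e_def by (rule not_less_Least) (simp add: e' e_def[symmetric])
  have "{a<..e} = insert e {a<..e'}" using e' by auto
  then have "sum w {a<..e} = w e + sum w {a<..e'}" using e' by simp
  moreover have "w e \<le> U" using Hw ae eb bT by auto
  ultimately have lt: "sum w {a<..e} < V + U" using notP by linarith
  have sp: "sum w {a<..b} = sum w {a<..e} + sum w {e<..b}"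
    by (rule sum_split_ivl) (use ae eb in auto)
  have ge: "V \<le> sum w {e<..b}" using sp lt M by linarith
  have "e < b"
  proof (rule ccontr)
    assume "\<not> e < b"
    then have "{e<..b} = {}" by auto
    then show False using ge V by simp
  qed
  then show ?thesis using ae Pe ge by blast
qed

lemma onesided:
  fixes w :: "nat \<Rightarrow> real"
  assumes Hw: "\<forall>s\<in>{1..T}. 0 \<le> w s \<and> w s \<le> U"
    and V: "V > 0" and U: "U \<ge> 0"
    and HR: "\<forall>a b. a < b \<and> b \<le> T \<and> sum w {a<..b} \<ge> V \<longrightarrow> Rprime T C y a b \<ge> W"
  shows "proc T C y x z S' \<Longrightarrow> x \<le> a \<Longrightarrow> a < b \<Longrightarrow> b \<le> z \<Longrightarrow> z \<le> T \<Longrightarrow> (x = a \<or> z = b)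
    \<Longrightarrow> 2 * V + U \<le> sum w {a<..b}
    \<Longrightarrow> \<exists>(a', b')\<in>S'. {a'<..b'} \<subseteq> {a<..b} \<and> W \<le> Rprime T C y a' b'"
proof (induction arbitrary: a b rule: proc.induct)
  case (leaf x z)
  then have xz: "x = a" "z = b" by auto
  have "V \<le> sum w {a<..b}" using leaf.prems V U by linarith
  moreover have "b \<le> T" using leaf.prems(3,4) by linarith
  ultimately have "W \<le> Rprime T C y a b" using HR[rule_format, of a b] leaf.prems(2) by blast
  then show ?case using xz by auto
next
  case (split x z c S1 S2)
  show ?case
  proof (cases "b \<le> c")
    case True
    have "z \<noteq> b" using split.hyps(3) True by linarith
    then have "x = a" using split.prems(5) by blast
    have "c \<le> T" using split.hyps(3) split.prems(4) by linarith
    have "\<exists>(a', b')\<in>S1. {a'<..b'} \<subseteq> {a<..b} \<and> W \<le> Rprime T C y a' b'"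
      by (rule split.IH(1)[OF split.prems(1,2) True \<open>c \<le> T\<close> _ split.prems(6)]) (use \<open>x = a\<close> in blast)
    then show ?thesis by auto
  next
    case nb: False
    show ?thesis
    proof (cases "c \<le> a")
      case True
      have "x \<noteq> a" using split.hyps(2) True by linarith
      then have "z = b" using split.prems(5) by blast
      have "\<exists>(a', b')\<in>S2. {a'<..b'} \<subseteq> {a<..b} \<and> W \<le> Rprime T C y a' b'"
        by (rule split.IH(2)[OF True split.prems(2,3,4) _ split.prems(6)]) (use \<open>z = b\<close> in blast)
      then show ?thesis by auto
    next
      case na: False
      have bT: "b \<le> T" using split.prems by auto
      obtain e where e: "a < e" "e < b" "V \<le> sum w {a<..e}" "V \<le> sum w {e<..b}"
        using split_point[OF _ V U bT split.prems(6)] Hw by blast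
      have Hw0: "\<forall>s\<in>{1..T}. 0 \<le> w s" using Hw by auto
      have "sum w {a<..e} \<le> sum w {x<..e}"
        by (rule sum_mono_ivl[OF _ _ Hw0]) (use split.prems e in auto)
      then have "V \<le> sum w {x<..e}" using e by linarith
      moreover have "x < e" "e \<le> T" using e split.prems(1,3,4) by linarith+
      ultimately have r1: "W \<le> Rprime T C y x e" using HR by blast
      have "sum w {e<..b} \<le> sum w {e<..z}"
        by (rule sum_mono2) (use split.prems e Hw in auto)
      then have "V \<le> sum w {e<..z}" using e by linarith
      moreover have "e < z" "z \<le> T" using e split.prems(3,4) by linarith+
      ultimately have r2: "W \<le> Rprime T C y e z" using HR by blast
      have "x < e" "e < z" using e split.prems by auto
      then have "min (Rprime T C y x e) (Rprime T C y e z) \<le> min (Rprime T C y x c) (Rprime T C y c z)"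
        using split.hyps(4) by blast
      then have m: "W \<le> Rprime T C y x c" "W \<le> Rprime T C y c z" using r1 r2 by auto
      have m1: "(x, c) \<in> S1" by (rule proc_mem) (rule split.hyps(5))
      have m2: "(c, z) \<in> S2" by (rule proc_mem) (rule split.hyps(6))
      show ?thesis
        using split.prems(5)
      proof
        assume "x = a"
        then have "{x<..c} \<subseteq> {a<..b}" using nb by auto
        then show ?thesis using m m1 by blast
      next
        assume "z = b"
        then have "{c<..z} \<subseteq> {a<..b}" using na by auto
        then show ?thesis using m m2 by blast
      qed
    qed
  qed
qed

lemma twosided:
  fixes w :: "nat \<Rightarrow> real"
  assumes Hw: "\<forall>s\<in>{1..T}. 0 \<le> w s \<and> w s \<le> U"
    and V: "V > 0" and U: "U \<ge> 0"
    and HR: "\<forall>a b. a < b \<and> b \<le> T \<and> sum w {a<..b} \<ge> V \<longrightarrow> Rprime T C y a b \<ge> W"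
  shows "proc T C y x z S' \<Longrightarrow> x \<le> a \<Longrightarrow> a < b \<Longrightarrow> b \<le> z \<Longrightarrow> z \<le> T
    \<Longrightarrow> 4 * V + 2 * U \<le> sum w {a<..b}
    \<Longrightarrow> \<exists>(a', b')\<in>S'. {a'<..b'} \<subseteq> {a<..b} \<and> W \<le> Rprime T C y a' b'"
proof (induction arbitrary: a b rule: proc.induct)
  case (leaf x z)
  then have xz: "x = a" "z = b" by auto
  have "V \<le> sum w {a<..b}" using leaf.prems V U by linarith
  moreover have "b \<le> T" using leaf.prems(3,4) by linarith
  ultimately have "W \<le> Rprime T C y a b" using HR[rule_format, of a b] leaf.prems(2) by blast
  then show ?case using xz by auto
next
  case (split x z c S1 S2)
  show ?case
  proof (cases "b \<le> c")
    case True
    have "c \<le> T" using split.hyps(3) split.prems(4) by linarith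
    have "\<exists>(a', b')\<in>S1. {a'<..b'} \<subseteq> {a<..b} \<and> W \<le> Rprime T C y a' b'"
      by (rule split.IH(1)[OF split.prems(1,2) True \<open>c \<le> T\<close> split.prems(5)])
    then show ?thesis by auto
  next
    case nb: False
    show ?thesis
    proof (cases "c \<le> a")
      case True
      have "\<exists>(a', b')\<in>S2. {a'<..b'} \<subseteq> {a<..b} \<and> W \<le> Rprime T C y a' b'"
        by (rule split.IH(2)[OF True split.prems(2,3,4,5)])
      then show ?thesis by auto
    next
      case na: False
      have sp: "sum w {a<..b} = sum w {a<..c} + sum w {c<..b}"
        by (rule sum_split_ivl) (use na nb in auto)
      show ?thesis
      proof (cases "2 * V + U \<le> sum w {a<..c}")
        case True
        have cT: "c \<le> T" using split.hyps(3) split.prems(4) by linarith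
        have ac: "a < c" using na by linarith
        have "\<exists>(a', b')\<in>S1. {a'<..b'} \<subseteq> {a<..c} \<and> W \<le> Rprime T C y a' b'"
          using onesided[OF Hw V U HR split.hyps(5) split.prems(1) ac order.refl cT _ True] by blast
        then obtain a' b' where "(a',b') \<in> S1" "{a'<..b'} \<subseteq> {a<..c}" "W \<le> Rprime T C y a' b'" by auto
        moreover have "{a<..c} \<subseteq> {a<..b}" using nb by auto
        ultimately show ?thesis by blast
      next
        case False
        then have T2: "2 * V + U \<le> sum w {c<..b}" using sp split.prems by linarith
        have cb: "c < b" using nb by linarith
        have "\<exists>(a', b')\<in>S2. {a'<..b'} \<subseteq> {c<..b} \<and> W \<le> Rprime T C y a' b'"
          using onesided[OF Hw V U HR split.hyps(6) order.refl cb split.prems(3) split.prems(4) _ T2] by blast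
        then obtain a' b' where "(a',b') \<in> S2" "{a'<..b'} \<subseteq> {c<..b}" "W \<le> Rprime T C y a' b'" by auto
        moreover have "{c<..b} \<subseteq> {a<..b}" using na by auto
        ultimately show ?thesis by blast
      qed
    qed
  qed
qed

theorem lemma6:
  fixes T :: nat and C K :: "nat \<Rightarrow> real" and R :: "nat \<Rightarrow> nat \<Rightarrow> real"
    and y :: "nat \<Rightarrow> real" and S :: "(nat \<times> nat) set"
  assumes Cpos: "\<forall>s\<in>{1..T}. C s > 0"
    and Knn: "\<forall>s\<in>{1..T}. K s \<ge> 0"
    and Rnn: "\<forall>a b. a < b \<and> b \<le> T \<longrightarrow> R a b \<ge> 0"
    and y01: "\<forall>s\<in>{1..T}. 0 \<le> y s \<and> y s \<le> 1"
    and hyp: "\<forall>a b. a < b \<and> b \<le> T \<and> Rtil T C R y a b > 0 \<longrightarrow>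
        (\<Sum>s\<in>{a<..b} - Splus T y. min (C s) (Rtil T C R y a b) * y s) \<ge> 10 * Rtil T C R y a b
      \<or> (\<Sum>s\<in>{s\<in>{a<..b} - Splus T y. C s \<ge> Rtil T C R y a b}. y s) \<ge> 6"
    and run: "proc T C y 0 T S"
  shows "\<forall>a b. a < b \<and> b \<le> T \<and> Rtil T C R y a b > 0 \<longrightarrow>
     (\<exists>(a', b')\<in>S. {a'<..b'} \<subseteq> {a<..b} \<and> Rprime T C y a' b' \<ge> Rtil T C R y a b)"
proof (intro allI impI)
  fix a b assume ab: "a < b \<and> b \<le> T \<and> Rtil T C R y a b > 0"
  define W where "W = Rtil T C R y a b"
  have W0: "W > 0" using ab W_def by simp
  define Sp where "Sp = Splus T y"
  have fs: "\<And>a b. (\<Sum>s\<in>{a<..b} - Sp. min (C s) W * y s)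
     = sum (\<lambda>s. if s \<in> Sp then 0 else min (C s) W * y s) {a<..b}"
    by (simp add: sum.If_cases Diff_eq)
  have gs: "\<And>a b. (\<Sum>s\<in>{s\<in>{a<..b} - Sp. C s \<ge> W}. y s)
     = sum (\<lambda>s. if s \<notin> Sp \<and> W \<le> C s then y s else 0) {a<..b}"
  proof -
    fix a b :: nat
    have "{s\<in>{a<..b} - Sp. C s \<ge> W} = {s\<in>{a<..b}. s \<notin> Sp \<and> W \<le> C s}" by auto
    then show "(\<Sum>s\<in>{s\<in>{a<..b} - Sp. C s \<ge> W}. y s)
     = sum (\<lambda>s. if s \<notin> Sp \<and> W \<le> C s then y s else 0) {a<..b}"
      by (simp only: sum.inter_filter[OF finite_greaterThanAtMost])
  qed
  have H: "(\<Sum>s\<in>{a<..b} - Sp. min (C s) W * y s) \<ge> 10 * W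
      \<or> (\<Sum>s\<in>{s\<in>{a<..b} - Sp. C s \<ge> W}. y s) \<ge> 6"
    using hyp[rule_format, of a b] ab unfolding W_def Sp_def by blast
  have "\<exists>(a', b')\<in>S. {a'<..b'} \<subseteq> {a<..b} \<and> W \<le> Rprime T C y a' b'"
    using H
  proof
    assume h: "(\<Sum>s\<in>{a<..b} - Sp. min (C s) W * y s) \<ge> 10 * W"
    define w where "w = (\<lambda>s. if s \<in> Sp then 0 else min (C s) W * y s)"
    have Hw: "\<forall>s\<in>{1..T}. 0 \<le> w s \<and> w s \<le> W"
    proof
      fix s assume s: "s \<in> {1..T}"
      have "0 \<le> y s" "y s \<le> 1" "C s > 0" using y01 Cpos s by auto
      moreover have "0 \<le> min (C s) W" "min (C s) W \<le> W" using \<open>C s > 0\<close> W0 by auto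
      ultimately have "min (C s) W * y s \<le> min (C s) W" "0 \<le> min (C s) W * y s"
        by (metis mult_left_le, metis mult_nonneg_nonneg)
      then show "0 \<le> w s \<and> w s \<le> W" unfolding w_def
        using \<open>min (C s) W \<le> W\<close> W0 by auto
    qed
    have HR: "\<forall>a b. a < b \<and> b \<le> T \<and> sum w {a<..b} \<ge> 2 * W \<longrightarrow> Rprime T C y a b \<ge> W"
    proof (intro allI impI)
      fix a b assume A: "a < b \<and> b \<le> T \<and> sum w {a<..b} \<ge> 2 * W"
      have "(\<Sum>s\<in>{a<..b} - Sp. min (C s) W * y s) \<ge> 2 * W"
        using fs[of a b] A unfolding w_def by simp
      then show "Rprime T C y a b \<ge> W"
        using Rprime_ge[OF Cpos y01, of b W a] W0 A unfolding Sp_def by simp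
    qed
    show ?thesis
    proof (rule twosided[OF Hw _ _ HR run])
      show "0 < 2 * W" "0 \<le> W" using W0 by simp_all
      show "0 \<le> a" "a < b" "b \<le> T" "T \<le> T" using ab by simp_all
      have "sum w {a<..b} = (\<Sum>s\<in>{a<..b} - Sp. min (C s) W * y s)" unfolding w_def by (rule fs[symmetric])
      then show "4 * (2 * W) + 2 * W \<le> sum w {a<..b}" using h by linarith
    qed
  next
    assume h: "(\<Sum>s\<in>{s\<in>{a<..b} - Sp. C s \<ge> W}. y s) \<ge> 6"
    define w where "w = (\<lambda>s. if s \<notin> Sp \<and> W \<le> C s then y s else 0)"
    have Hw: "\<forall>s\<in>{1..T}. 0 \<le> w s \<and> w s \<le> 1"
      using y01 unfolding w_def by auto
    have HR: "\<forall>a b. a < b \<and> b \<le> T \<and> sum w {a<..b} \<ge> 1 \<longrightarrow> Rprime T C y a b \<ge> W"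
    proof (intro allI impI)
      fix a b assume A: "a < b \<and> b \<le> T \<and> sum w {a<..b} \<ge> 1"
      have "(\<Sum>s\<in>{s\<in>{a<..b} - Sp. C s \<ge> W}. y s) \<ge> 1"
        using gs[of a b] A unfolding w_def by simp
      then show "Rprime T C y a b \<ge> W"
        using Rprime_ge[OF Cpos y01, of b W a] W0 A unfolding Sp_def by simp
    qed
    show ?thesis
    proof (rule twosided[OF Hw _ _ HR run])
      show "0 < (1::real)" "0 \<le> (1::real)" by simp_all
      show "0 \<le> a" "a < b" "b \<le> T" "T \<le> T" using ab by simp_all
      have "sum w {a<..b} = (\<Sum>s\<in>{s\<in>{a<..b} - Sp. C s \<ge> W}. y s)" unfolding w_def by (rule gs[symmetric])
      then show "4 * 1 + 2 * 1 \<le> sum w {a<..b}" using h by linarith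
    qed
  qed
  then show "\<exists>(a', b')\<in>S. {a'<..b'} \<subseteq> {a<..b} \<and> Rprime T C y a' b' \<ge> Rtil T C R y a b"
    unfolding W_def by blast
qed

end
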